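(* Let $n\ge 3$ and let $K$ be a proper $4$-coloring of $H_2(n,n-1)$. Then $|T_x(K)|\le 2$ for all $x\in\mathbb{Z}_2^n$. Consequently $\mathrm{rb}(K)\le \frac{2}{n+1}$, with equality if and only if $|T_x(K)|=2$ for all $x\in\mathbb{Z}_2^n$.
   Context: $H_2(n,n-1)$ is the simple undirected graph with vertex set $\mathbb{Z}_2^n$ in which $x,y$ are adjacent iff their Hamming distance $|\{i:x_i\ne y_i\}|$ is at least $n-1$. For a simple graph $G=(V,E)$ and a proper $k$-coloring $K:V\to[k]$ (adjacent vertices receive different colors), an edge $(x,y)\in E$ is a transition edge for $K$ if the map obtained from $K$ by swapping the colors of $x$ and $y$ (i.e. assigning $K(y)$ to $x$, $K(x)$ to $y$, and keeping all other colors) is again a proper $k$-coloring. $T(K)$ is the set of transition edges, $T_x(K)=\{y: (x,y)\in T(K)\}$, and the robustness of $K$ is $\mathrm{rb}(K)=|T(K)|/|E|$ (edges counted as unordered pairs). *)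

theory Defs
  imports Main "HOL-Library.Disjoint_Sets" Complex_Main
begin

text \<open>Vertices of Z_2^n are represented as boolean lists of length n.\<close>

definition cube :: "nat \<Rightarrow> bool list set" where
  "cube n = {xs. length xs = n}"

definition hamming :: "bool list \<Rightarrow> bool list \<Rightarrow> nat" where
  "hamming x y = card {i. i < length x \<and> x ! i \<noteq> y ! i}"

definition H_adj :: "nat \<Rightarrow> bool list \<Rightarrow> bool list \<Rightarrow> bool" where
  "H_adj n x y \<longleftrightarrow> x \<in> cube n \<and> y \<in> cube n \<and> x \<noteq> y \<and> hamming x y \<ge> n - 1"

definition graph_edges :: "'a set \<Rightarrow> ('a \<Rightarrow> 'a \<Rightarrow> bool) \<Rightarrow> 'a set set" where
  "graph_edges V adj = {{x, y} | x y. x \<in> V \<and> y \<in> V \<and> adj x y}"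

definition proper_coloring :: "'a set \<Rightarrow> ('a \<Rightarrow> 'a \<Rightarrow> bool) \<Rightarrow> nat \<Rightarrow> ('a \<Rightarrow> nat) \<Rightarrow> bool" where
  "proper_coloring V adj k K \<longleftrightarrow>
     (\<forall>x\<in>V. K x \<in> {1..k}) \<and> (\<forall>x\<in>V. \<forall>y\<in>V. adj x y \<longrightarrow> K x \<noteq> K y)"

definition swap_colors :: "('a \<Rightarrow> nat) \<Rightarrow> 'a \<Rightarrow> 'a \<Rightarrow> ('a \<Rightarrow> nat)" where
  "swap_colors K x y = K(x := K y, y := K x)"

definition transition_edge :: "'a set \<Rightarrow> ('a \<Rightarrow> 'a \<Rightarrow> bool) \<Rightarrow> nat \<Rightarrow> ('a \<Rightarrow> nat) \<Rightarrow> 'a \<Rightarrow> 'a \<Rightarrow> bool" where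
  "transition_edge V adj k K x y \<longleftrightarrow>
     x \<in> V \<and> y \<in> V \<and> adj x y \<and> proper_coloring V adj k (swap_colors K x y)"

definition transition_set :: "'a set \<Rightarrow> ('a \<Rightarrow> 'a \<Rightarrow> bool) \<Rightarrow> nat \<Rightarrow> ('a \<Rightarrow> nat) \<Rightarrow> 'a set set" where
  "transition_set V adj k K = {{x, y} | x y. transition_edge V adj k K x y}"

definition transition_nbrs :: "'a set \<Rightarrow> ('a \<Rightarrow> 'a \<Rightarrow> bool) \<Rightarrow> nat \<Rightarrow> ('a \<Rightarrow> nat) \<Rightarrow> 'a \<Rightarrow> 'a set" where
  "transition_nbrs V adj k K x = {y. transition_edge V adj k K x y}"

definition robustness :: "'a set \<Rightarrow> ('a \<Rightarrow> 'a \<Rightarrow> bool) \<Rightarrow> nat \<Rightarrow> ('a \<Rightarrow> nat) \<Rightarrow> real" where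
  "robustness V adj k K = real (card (transition_set V adj k K)) / real (card (graph_edges V adj))"

end

theory Submission
  imports Defs
begin

lemma handshake:
  assumes fin: "finite V"
    and sym: "\<And>x y. adj x y \<Longrightarrow> adj y x"
    and inV: "\<And>x y. adj x y \<Longrightarrow> x \<in> V \<and> y \<in> V"
    and irr: "\<And>x. \<not> adj x x"
  shows "2 * card (graph_edges V adj) = (\<Sum>x\<in>V. card {y. adj x y})"
proof -
  let ?E = "graph_edges V adj"
  have Esub: "?E \<subseteq> Pow V" unfolding graph_edges_def by auto
  have finE: "finite ?E" using Esub fin by (meson finite_Pow_iff finite_subset)
  have c2: "card e = 2" if "e \<in> ?E" for e
    using that irr unfolding graph_edges_def by (auto simp: card_insert_if)
  have deg: "card {y. adj x y} = card {e\<in>?E. x \<in> e}" if "x \<in> V" for x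
  proof -
    have "bij_betw (\<lambda>y. {x, y}) {y. adj x y} {e\<in>?E. x \<in> e}"
    proof (rule bij_betwI')
      fix y z assume "y \<in> {y. adj x y}" "z \<in> {y. adj x y}"
      then show "({x, y} = {x, z}) = (y = z)" using irr
        by (metis doubleton_eq_iff mem_Collect_eq)
    next
      fix y assume "y \<in> {y. adj x y}"
      then show "{x, y} \<in> {e \<in> ?E. x \<in> e}" using inV unfolding graph_edges_def by blast
    next
      fix e assume "e \<in> {e \<in> ?E. x \<in> e}"
      then obtain a b where e: "e = {a, b}" "adj a b" "x \<in> e" unfolding graph_edges_def by blast
      then show "\<exists>y\<in>{y. adj x y}. e = {x, y}"
        using sym by (auto simp: insert_commute)
    qed
    then show ?thesis by (rule bij_betw_same_card)
  qed
  have "(\<Sum>x\<in>V. card {y. adj x y}) = (\<Sum>x\<in>V. card {e\<in>?E. x \<in> e})"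
    using deg by simp
  also have "\<dots> = (\<Sum>x\<in>V. \<Sum>e\<in>?E. if x \<in> e then 1 else 0)"
    using finE by (simp add: sum.If_cases Int_def conj_commute)
  also have "\<dots> = (\<Sum>e\<in>?E. \<Sum>x\<in>V. if x \<in> e then 1 else 0)"
    by (rule sum.swap)
  also have "\<dots> = (\<Sum>e\<in>?E. card (V \<inter> e))"
    using fin by (simp add: sum.If_cases)
  also have "\<dots> = (\<Sum>e\<in>?E. 2)"
  proof (rule sum.cong)
    fix e assume "e \<in> ?E"
    then have "V \<inter> e = e" using Esub by auto
    then show "card (V \<inter> e) = 2" using c2 \<open>e \<in> ?E\<close> by simp
  qed simp
  finally show ?thesis by simp
qed


lemma te_sym:
  assumes sym: "\<And>x y. adj x y \<Longrightarrow> adj y x" and irr: "\<And>x. \<not> adj x x"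
  shows "transition_edge V adj k K x y \<Longrightarrow> transition_edge V adj k K y x"
proof -
  assume a: "transition_edge V adj k K x y"
  then have "x \<noteq> y" using irr unfolding transition_edge_def by blast
  then have "swap_colors K x y = swap_colors K y x"
    unfolding swap_colors_def by (simp add: fun_upd_twist)
  with a sym show ?thesis unfolding transition_edge_def by metis
qed

lemma te_bound:
  assumes pc: "proper_coloring V adj 4 K"
    and inV: "\<And>x y. adj x y \<Longrightarrow> x \<in> V \<and> y \<in> V"
    and irr: "\<And>x. \<not> adj x x"
    and x: "x \<in> V"
    and finN: "finite {y. adj x y}"
    and degN: "card {y. adj x y} \<ge> 4"
  shows "card {y. transition_edge V adj 4 K x y} \<le> 2"
proof (rule ccontr)
  let ?T = "{y. transition_edge V adj 4 K x y}"
  let ?N = "{y. adj x y}"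
  assume "\<not> ?thesis"
  then have c3: "card ?T \<ge> 3" by simp
  have TN: "?T \<subseteq> ?N" unfolding transition_edge_def by auto
  have finT: "finite ?T" using finite_subset[OF TN finN] .
  have uniq: "K u \<noteq> K w" if w: "w \<in> ?T" and u: "adj x u" "u \<noteq> w" for u w
  proof -
    have te: "x \<in> V" "w \<in> V" "adj x w" "proper_coloring V adj 4 (swap_colors K x w)"
      using w unfolding transition_edge_def by auto
    have xw: "x \<noteq> w" using te(3) irr by metis
    have xu: "x \<noteq> u" using u irr by metis
    have "swap_colors K x w x \<noteq> swap_colors K x w u"
      using te(4) u inV unfolding proper_coloring_def by blast
    then show ?thesis using xw xu u(2) unfolding swap_colors_def by auto
  qed
  have injT: "inj_on K ?T"
  proof (rule inj_onI)
    fix a b assume "a \<in> ?T" "b \<in> ?T" "K a = K b"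
    then show "a = b" using uniq TN by blast
  qed
  have img: "K ` ?T \<subseteq> {1..4} - {K x}"
  proof
    fix c assume "c \<in> K ` ?T"
    then obtain w where w: "w \<in> ?T" "c = K w" by blast
    then have "adj x w" "w \<in> V" using TN inV by auto
    moreover have "K x \<noteq> K w" using pc x \<open>adj x w\<close> \<open>w \<in> V\<close> unfolding proper_coloring_def by blast
    moreover have "K w \<in> {1..4}" using pc \<open>w \<in> V\<close> unfolding proper_coloring_def by blast
    ultimately show "c \<in> {1..4} - {K x}" using w by auto
  qed
  have cimg: "card ({1..4::nat} - {K x}) = 3"
    using pc x unfolding proper_coloring_def by auto
  have "card (K ` ?T) = card ?T" using card_image[OF injT] .
  then have "card (K ` ?T) \<ge> card ({1..4::nat} - {K x})" using c3 cimg by simp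
  then have eq: "K ` ?T = {1..4} - {K x}"
    using card_seteq[OF _ img] by simp
  have "?N \<subseteq> ?T"
  proof
    fix u assume u: "u \<in> ?N"
    then have "u \<in> V" using inV by auto
    moreover have "K x \<noteq> K u" using pc x u \<open>u \<in> V\<close> unfolding proper_coloring_def by blast
    moreover have "K u \<in> {1..4}" using pc \<open>u \<in> V\<close> unfolding proper_coloring_def by blast
    ultimately have "K u \<in> {1..4} - {K x}" by auto
    then obtain w where w: "w \<in> ?T" "K u = K w" using eq by (metis imageE)
    then show "u \<in> ?T" using uniq u by auto
  qed
  then have "card ?N \<le> card ?T" using card_mono[OF finT] by blast
  moreover have "card ?T \<le> 3"
    using card_mono[OF _ img] cimg \<open>card (K ` ?T) = card ?T\<close> by simp
  ultimately show False using degN by simp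
qed


lemma H_sym: "H_adj n x y \<Longrightarrow> H_adj n y x"
  unfolding H_adj_def hamming_def cube_def by (auto simp: eq_commute)

lemma H_nbrs:
  assumes n: "n \<ge> 3" and x: "x \<in> cube n"
  shows "{y. H_adj n x y} = (\<lambda>i. (map Not x)[i := x!i]) ` {..n}"
    and "inj_on (\<lambda>i. (map Not x)[i := x!i]) {..n}"
proof -
  let ?f = "\<lambda>i. (map Not x)[i := x!i]"
  have lx: "length x = n" using x unfolding cube_def by simp
  have fn: "?f i ! j = (if j = i then x!i else \<not> x!j)" if "j < n" for i j
    using that lx by (auto simp: nth_list_update)
  show "inj_on ?f {..n}"
  proof (rule inj_onI)
    fix i j assume ij: "i \<in> {..n}" "j \<in> {..n}" "?f i = ?f j"
    show "i = j"
    proof (rule ccontr)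
      assume "i \<noteq> j"
      then have "i < n \<or> j < n" using ij by auto
      then show False
      proof
        assume "i < n" then have "?f i ! i \<noteq> ?f j ! i" using fn \<open>i \<noteq> j\<close> lx by simp
        then show False using ij by simp
      next
        assume "j < n" then have "?f i ! j \<noteq> ?f j ! j" using fn \<open>i \<noteq> j\<close> lx by simp
        then show False using ij by simp
      qed
    qed
  qed
  show "{y. H_adj n x y} = ?f ` {..n}"
  proof
    show "?f ` {..n} \<subseteq> {y. H_adj n x y}"
    proof
      fix y assume "y \<in> ?f ` {..n}"
      then obtain i where i: "i \<le> n" "y = ?f i" by auto
      have ly: "length y = n" using i lx by simp
      have sub: "{..<n} - {i} \<subseteq> {j. j < length x \<and> x ! j \<noteq> y ! j}"
      proof
        fix j assume "j \<in> {..<n} - {i}"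
        then have "j < n" "j \<noteq> i" by auto
        then have "y ! j = (\<not> x ! j)" using fn[of j i] i(2) by simp
        then show "j \<in> {j. j < length x \<and> x ! j \<noteq> y ! j}" using \<open>j < n\<close> lx by simp
      qed
      have "n - 1 \<le> card ({..<n} - {i})"
        using diff_card_le_card_Diff[of "{i}" "{..<n}"] by simp
      also have "\<dots> \<le> hamming x y" unfolding hamming_def
        using card_mono[OF _ sub] by simp
      finally have h: "n - 1 \<le> hamming x y" .
      obtain j where j: "j < n" "j \<noteq> i" 
      proof
        show "(if i = 0 then 1 else 0) < n" "(if i = 0 then 1 else 0) \<noteq> i" using n by auto
      qed
      then have "y ! j \<noteq> x ! j" using fn i lx by simp
      then have "y \<noteq> x" by auto
      then show "y \<in> {y. H_adj n x y}" using h ly x unfolding H_adj_def cube_def by auto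
    qed
  next
    show "{y. H_adj n x y} \<subseteq> ?f ` {..n}"
    proof
      fix y assume "y \<in> {y. H_adj n x y}"
      then have ly: "length y = n" and h: "hamming x y \<ge> n - 1"
        unfolding H_adj_def cube_def by auto
      let ?A = "{j. j < n \<and> x!j = y!j}"
      let ?D = "{j. j < length x \<and> x ! j \<noteq> y ! j}"
      have "?A \<union> ?D = {..<n}" using lx by auto
      moreover have "?A \<inter> ?D = {}" by auto
      ultimately have "card ?A + card ?D = n"
        by (metis card_Un_disjoint card_lessThan finite_Un finite_lessThan)
      then have cA: "card ?A \<le> Suc 0" using h unfolding hamming_def by simp
      have finA: "finite ?A" by simp
      show "y \<in> ?f ` {..n}"
      proof (cases "?A = {}")
        case True
        have "y = ?f n"
        proof (rule nth_equalityI)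
          show "length y = length (?f n)" using ly lx by simp
        next
          fix j assume "j < length y"
          then have "j < n" using ly by simp
          then show "y ! j = ?f n ! j" using True fn lx by auto
        qed
        then show ?thesis by auto
      next
        case False
        then obtain i where iA: "i \<in> ?A" by blast
        then have A: "?A = {i}" using cA card_le_Suc0_iff_eq[OF finA] by blast
        have "y = ?f i"
        proof (rule nth_equalityI)
          show "length y = length (?f i)" using ly lx by simp
        next
          fix j assume "j < length y"
          then have "j < n" using ly by simp
          then show "y ! j = ?f i ! j" using A fn lx by (cases "j = i") auto
        qed
        then show ?thesis using iA by auto
      qed
    qed
  qed
qed


theorem proposition4p9:
  fixes n :: nat and K :: "bool list \<Rightarrow> nat"
  assumes "n \<ge> 3"
    and "proper_coloring (cube n) (H_adj n) 4 K"
  shows "(\<forall>x\<in>cube n. card (transition_nbrs (cube n) (H_adj n) 4 K x) \<le> 2)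
    \<and> robustness (cube n) (H_adj n) 4 K \<le> 2 / (real n + 1)
    \<and> (robustness (cube n) (H_adj n) 4 K = 2 / (real n + 1) \<longleftrightarrow>
         (\<forall>x\<in>cube n. card (transition_nbrs (cube n) (H_adj n) 4 K x) = 2))"
proof -
  let ?V = "cube n"
  let ?adj = "H_adj n"
  let ?te = "transition_edge ?V ?adj 4 K"
  let ?t = "\<lambda>x. card {y. ?te x y}"
  have finV: "finite ?V"
    by (rule finite_subset[OF _ finite_lists_length_eq[OF finite_UNIV, of n]]) (auto simp: cube_def)
  have neV: "?V \<noteq> {}" using length_replicate[of n True] unfolding cube_def by blast
  have irr: "\<And>x. \<not> ?adj x x" unfolding H_adj_def by simp
  have inV: "\<And>x y. ?adj x y \<Longrightarrow> x \<in> ?V \<and> y \<in> ?V" unfolding H_adj_def by simp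
  have deg: "card {y. ?adj x y} = n + 1" if "x \<in> ?V" for x
    using H_nbrs[OF assms(1) that] card_image[OF H_nbrs(2)[OF assms(1) that]] by simp
  have finN: "finite {y. ?adj x y}" if "x \<in> ?V" for x
    using H_nbrs[OF assms(1) that] by simp
  have tb: "?t x \<le> 2" if "x \<in> ?V" for x
    using te_bound[OF assms(2) inV irr that finN[OF that]] deg[OF that] assms(1) by simp
  have hE: "2 * card (graph_edges ?V ?adj) = card ?V * (n + 1)"
  proof -
    have "2 * card (graph_edges ?V ?adj) = (\<Sum>x\<in>?V. card {y. ?adj x y})"
      by (rule handshake) (use finV H_sym inV irr in auto)
    then show ?thesis using deg by simp
  qed
  have teirr: "\<And>x. \<not> ?te x x" unfolding transition_edge_def using irr by blast
  have teV: "\<And>x y. ?te x y \<Longrightarrow> x \<in> ?V \<and> y \<in> ?V" unfolding transition_edge_def by blast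
  have tsym: "\<And>x y. ?te x y \<Longrightarrow> ?te y x" 
  proof -
    fix x y assume "?te x y"
    show "?te y x" by (rule te_sym[of ?adj]) (use H_sym irr \<open>?te x y\<close> in auto)
  qed
  have TE: "transition_set ?V ?adj 4 K = graph_edges ?V ?te"
    unfolding transition_set_def graph_edges_def using teV by blast
  have hT: "2 * card (transition_set ?V ?adj 4 K) = (\<Sum>x\<in>?V. ?t x)"
  proof -
    have "2 * card (graph_edges ?V ?te) = (\<Sum>x\<in>?V. card {y. ?te x y})"
      by (rule handshake) (use finV tsym teV teirr in auto)
    then show ?thesis using TE by simp
  qed
  let ?N = "card ?V"
  let ?S = "\<Sum>x\<in>?V. ?t x"
  have Npos: "?N > 0" using finV neV by (simp add: card_gt_0_iff)
  have rb: "robustness ?V ?adj 4 K = real ?S / (real ?N * (real n + 1))"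
  proof -
    have "robustness ?V ?adj 4 K = real (2 * card (transition_set ?V ?adj 4 K)) / real (2 * card (graph_edges ?V ?adj))"
      unfolding robustness_def by simp
    also have "\<dots> = real ?S / (real ?N * (real n + 1))" using hT hE
      by (metis of_nat_1 of_nat_add of_nat_mult)
    finally show ?thesis .
  qed
  have Sle: "?S \<le> 2 * ?N"
    using sum_mono[of ?V ?t "\<lambda>_. 2"] tb by simp
  have den: "real ?N * (real n + 1) > 0" using Npos by simp
  have eq2: "2 / (real n + 1) = real (2 * ?N) / (real ?N * (real n + 1))"
  proof -
    have "real ?N \<noteq> 0" using Npos by simp
    then have "(real ?N * 2) / (real ?N * (real n + 1)) = 2 / (real n + 1)"
      by (rule nonzero_mult_divide_mult_cancel_left)
    then show ?thesis by (simp add: mult.commute)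
  qed
  have part2: "robustness ?V ?adj 4 K \<le> 2 / (real n + 1)"
  proof -
    have "real ?S \<le> real (2 * ?N)" using Sle by (simp only: of_nat_le_iff)
    then have "real ?S / (real ?N * (real n + 1)) \<le> real (2 * ?N) / (real ?N * (real n + 1))"
      using den by (intro divide_right_mono) auto
    then show ?thesis unfolding rb eq2 .
  qed
  have part3: "robustness ?V ?adj 4 K = 2 / (real n + 1) \<longleftrightarrow> (\<forall>x\<in>?V. ?t x = 2)"
  proof -
    have "robustness ?V ?adj 4 K = 2 / (real n + 1) \<longleftrightarrow> ?S = 2 * ?N"
    proof -
      have "real ?S / (real ?N * (real n + 1)) = real (2 * ?N) / (real ?N * (real n + 1))
            \<longleftrightarrow> real ?S = real (2 * ?N)"
        using den by (metis divide_cancel_right less_irrefl)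
      also have "\<dots> \<longleftrightarrow> ?S = 2 * ?N" by (simp only: of_nat_eq_iff)
      finally show ?thesis unfolding rb eq2 .
    qed
    also have "\<dots> \<longleftrightarrow> (\<forall>x\<in>?V. ?t x = 2)"
    proof
      assume S: "?S = 2 * ?N"
      show "\<forall>x\<in>?V. ?t x = 2"
      proof
        fix x assume "x \<in> ?V"
        show "?t x = 2"
          by (rule sum_mono_inv[of ?t ?V "\<lambda>_. 2"]) (use S tb finV \<open>x \<in> ?V\<close> in auto)
      qed
    next
      assume "\<forall>x\<in>?V. ?t x = 2"
      then show "?S = 2 * ?N" by simp
    qed
    finally show ?thesis .
  qed
  show ?thesis using tb part2 part3 unfolding transition_nbrs_def by simp
qed

end
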